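(* Let $f\colon\mathbb R\to\mathbb R$ be continuous with $|f(x)|\leqslant a\cosh(bx)$ for all $x$, for some $a>0$, $b\in\mathbb R$. Fix $\lambda>0$ and $P_n=e^{-\lambda}\lambda^n/n!$. For a continuous function $u\colon\mathbb R\to\mathbb R$, a compactly supported Borel probability measure $\rho$ and $x\in\mathbb R$, define, with $h^u_k\colon y\mapsto u(y)/k$, $$\sigma^{u,\rho}_x=\sum_{n=0}^\infty P_n\,(h^u_{n+1})_\star\big(\delta_x*\rho^{*n}\big),\qquad\sigma^{u,\rho}=\sum_{n=0}^\infty P_n\,(h^u_{n+1})_\star\big(\rho^{*(n+1)}\big),$$ and $\langle\sigma,y\rangle=\int y\,d\sigma(y)$. Then for every compactly supported probability measure $\rho$ there exists a sequence $k\mapsto(I_k,p_k)$ of closed intervals $I_k$ and real trigonometric polynomials $p_k$, with $p_k$ approximating $f$ on $I_k$ (i.e. $\sup_{x\in I_k}|f(x)-p_k(x)|\to0$), such that: $\sigma^{p_k,\rho}_x\to\sigma^{f,\rho}_x$ for every $x\in\operatorname{supp}\rho$ and $\sigma^{p_k,\rho}\to\sigma^{f,\rho}$, in the sense of convergence against every continuous compactly supported test function; $\langle\sigma^{p_k,\rho}_x,y\rangle\to\langle\sigma^{f,\rho}_x,y\rangle$ uniformly in $x\in\operatorname{supp}\rho$; and $\langle\sigma^{p_k,\rho},y\rangle\to\langle\sigma^{f,\rho},y\rangle$ as a sequence of numbers.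
   Context: A real trigonometric polynomial of period $T>0$ is a real-valued function of the form $p(x)=\sum_{k=-n}^n c_ke^{2\pi ikx/T}$ with $c_k\in\mathbb C$. $(h)_\star$ denotes pushforward of measures, $*$ convolution, $\rho^{*0}=\delta_0$, and $\delta_a$ the Dirac measure at $a$. *)

theory Defs
  imports "HOL-Probability.Probability" "HOL-Probability.Convolution"
begin

definition real_trig_poly :: "(real \<Rightarrow> real) \<Rightarrow> bool" where
  "real_trig_poly p \<longleftrightarrow> (\<exists>T>0. \<exists>n::nat. \<exists>c::int \<Rightarrow> complex.
     \<forall>x. complex_of_real (p x) =
          (\<Sum>k\<in>{-int n..int n}. c k * exp (2 * pi * \<i> * of_int k * of_real x / of_real T)))"

definition msupp :: "real measure \<Rightarrow> real set" where
  "msupp \<rho> = {x. \<forall>e>0. emeasure \<rho> (ball x e) > 0}"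

definition compactly_supported_prob :: "real measure \<Rightarrow> bool" where
  "compactly_supported_prob \<rho> \<longleftrightarrow>
     prob_space \<rho> \<and> sets \<rho> = sets borel \<and> compact (msupp \<rho>)"

fun conv_pow :: "real measure \<Rightarrow> nat \<Rightarrow> real measure" where
  "conv_pow \<rho> 0 = return borel 0"
| "conv_pow \<rho> (Suc n) = convolution \<rho> (conv_pow \<rho> n)"

definition poisson_weight :: "real \<Rightarrow> nat \<Rightarrow> real" where
  "poisson_weight lam n = exp (- lam) * lam ^ n / fact n"

definition measure_series :: "(nat \<Rightarrow> real) \<Rightarrow> (nat \<Rightarrow> real measure) \<Rightarrow> real measure" where
  "measure_series w \<mu> = measure_of UNIV (sets borel)
     (\<lambda>A. \<Sum>n. ennreal (w n) * emeasure (\<mu> n) A)"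

definition hfun :: "(real \<Rightarrow> real) \<Rightarrow> nat \<Rightarrow> real \<Rightarrow> real" where
  "hfun u k y = u y / real k"

definition sigma_x :: "real \<Rightarrow> (real \<Rightarrow> real) \<Rightarrow> real measure \<Rightarrow> real \<Rightarrow> real measure" where
  "sigma_x lam u \<rho> x = measure_series (poisson_weight lam)
     (\<lambda>n. distr (convolution (return borel x) (conv_pow \<rho> n)) borel (hfun u (n + 1)))"

definition sigma :: "real \<Rightarrow> (real \<Rightarrow> real) \<Rightarrow> real measure \<Rightarrow> real measure" where
  "sigma lam u \<rho> = measure_series (poisson_weight lam)
     (\<lambda>n. distr (conv_pow \<rho> (n + 1)) borel (hfun u (n + 1)))"

definition vague_conv :: "(nat \<Rightarrow> real measure) \<Rightarrow> real measure \<Rightarrow> bool" where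
  "vague_conv \<mu>s \<mu> \<longleftrightarrow> (\<forall>g :: real \<Rightarrow> real. continuous_on UNIV g \<and> compact (closure {y. g y \<noteq> 0}) \<longrightarrow>
      (\<lambda>k. integral\<^sup>L (\<mu>s k) g) \<longlonglongrightarrow> integral\<^sup>L \<mu> g)"

end

theory Submission
  imports Defs
begin

lemma measure_series_bind:
  fixes \<nu> :: "nat \<Rightarrow> real measure"
  assumes w: "\<And>n. w n \<ge> 0"
    and nu: "\<And>n. subprob_space (\<nu> n)" "\<And>n. sets (\<nu> n) = sets borel"
  shows "measure_series w \<nu> = density (count_space UNIV) (\<lambda>n. ennreal (w n)) \<bind> \<nu>"
proof -
  let ?N = "density (count_space UNIV) (\<lambda>n. ennreal (w n))"
  let ?B = "?N \<bind> \<nu>"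
  have meas: "\<nu> \<in> measurable ?N (subprob_algebra borel)"
    using nu by (auto simp: space_subprob_algebra)
  have ne: "space ?N \<noteq> {}" by simp
  have sB: "sets ?B = sets borel" using sets_bind[of ?N \<nu> borel] nu ne by simp
  have spB: "space ?B = UNIV" using sets_eq_imp_space_eq[OF sB] by simp
  have "measure_series w \<nu> = measure_of UNIV (sets borel) (emeasure ?B)"
    unfolding measure_series_def
  proof (rule measure_of_eq)
    fix A :: "real set" assume "A \<in> sigma_sets UNIV (sets borel)"
    then have A: "A \<in> sets borel"
      by (metis sets.sigma_sets_eq space_borel)
    have "emeasure ?B A = (\<integral>\<^sup>+n. emeasure (\<nu> n) A \<partial>?N)"
      using emeasure_bind[OF ne meas A] .
    also have "\<dots> = (\<integral>\<^sup>+n. ennreal (w n) * emeasure (\<nu> n) A \<partial>count_space UNIV)"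
      by (subst nn_integral_density) auto
    also have "\<dots> = (\<Sum>n. ennreal (w n) * emeasure (\<nu> n) A)"
      by (rule nn_integral_count_space_nat)
    finally show "(\<Sum>n. ennreal (w n) * emeasure (\<nu> n) A) = emeasure ?B A" by simp
  qed simp
  also have "\<dots> = ?B"
    using measure_of_of_measure[of ?B] sB spB by simp
  finally show ?thesis .
qed


lemma series_integral_nonneg:
  fixes \<nu> :: "nat \<Rightarrow> real measure" and \<psi> :: "real \<Rightarrow> real"
  assumes w: "\<And>n. w n \<ge> 0"
    and nu: "\<And>n. subprob_space (\<nu> n)" "\<And>n. sets (\<nu> n) = sets borel"
    and psi: "\<psi> \<in> borel_measurable borel" "\<And>y. \<psi> y \<ge> 0"
    and bnd: "\<And>n. AE y in \<nu> n. \<psi> y \<le> c n"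
    and c: "\<And>n. c n \<ge> 0" and sm: "summable (\<lambda>n. w n * c n)"
  shows "integrable (measure_series w \<nu>) \<psi>"
    "summable (\<lambda>n. w n * integral\<^sup>L (\<nu> n) \<psi>)"
    "integral\<^sup>L (measure_series w \<nu>) \<psi> = (\<Sum>n. w n * integral\<^sup>L (\<nu> n) \<psi>)"
proof -
  let ?N = "density (count_space UNIV) (\<lambda>n. ennreal (w n))"
  let ?B = "?N \<bind> \<nu>"
  have eq: "measure_series w \<nu> = ?B" by (rule measure_series_bind[OF w nu])
  have meas: "\<nu> \<in> measurable ?N (subprob_algebra borel)"
    using nu by (auto simp: space_subprob_algebra)
  have ne: "space ?N \<noteq> {}" by simp
  have sB: "sets ?B = sets borel" using sets_bind[of ?N \<nu> borel] nu ne by simp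
  have psiB: "\<psi> \<in> borel_measurable ?B" using psi(1) measurable_cong_sets[OF sB refl] by blast
  have psin: "\<psi> \<in> borel_measurable (\<nu> n)" for n using psi(1) measurable_cong_sets[OF nu(2) refl] by blast
  interpret S: subprob_space "\<nu> n" for n by (rule nu)
  have int: "integrable (\<nu> n) \<psi>" for n
    by (rule S.integrable_const_bound[where B="c n"]) (use bnd[of n] psi(2) psin in \<open>auto elim!: AE_mp\<close>)
  have I0: "integral\<^sup>L (\<nu> n) \<psi> \<ge> 0" for n using psi(2) by simp
  have Ic: "integral\<^sup>L (\<nu> n) \<psi> \<le> c n" for n
  proof -
    have "integral\<^sup>L (\<nu> n) \<psi> \<le> integral\<^sup>L (\<nu> n) (\<lambda>_. c n)"
      by (rule integral_mono_AE) (use int bnd in auto)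
    also have "\<dots> = c n * measure (\<nu> n) (space (\<nu> n))" by simp
    also have "\<dots> \<le> c n" using S.subprob_measure_le_1 c[of n]
      by (simp add: mult_left_le)
    finally show ?thesis .
  qed
  show sm2: "summable (\<lambda>n. w n * integral\<^sup>L (\<nu> n) \<psi>)"
    by (rule summable_comparison_test[OF _ sm]) (use w I0 Ic in \<open>auto intro!: exI[of _ 0] mult_left_mono\<close>)
  have "(\<integral>\<^sup>+y. ennreal (\<psi> y) \<partial>?B) = (\<integral>\<^sup>+n. \<integral>\<^sup>+y. ennreal (\<psi> y) \<partial>\<nu> n \<partial>?N)"
    by (rule nn_integral_bind[OF _ meas]) (use psi in auto)
  also have "\<dots> = (\<integral>\<^sup>+n. ennreal (w n) * \<integral>\<^sup>+y. ennreal (\<psi> y) \<partial>\<nu> n \<partial>count_space UNIV)"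
    by (subst nn_integral_density) auto
  also have "\<dots> = (\<Sum>n. ennreal (w n) * \<integral>\<^sup>+y. ennreal (\<psi> y) \<partial>\<nu> n)"
    by (rule nn_integral_count_space_nat)
  also have "\<dots> = (\<Sum>n. ennreal (w n * integral\<^sup>L (\<nu> n) \<psi>))"
    using nn_integral_eq_integral[OF int] psi(2) w I0 by (simp add: ennreal_mult)
  also have "\<dots> = ennreal (\<Sum>n. w n * integral\<^sup>L (\<nu> n) \<psi>)"
    by (rule suminf_ennreal2[OF _ sm2]) (use w I0 in auto)
  finally have nn: "(\<integral>\<^sup>+y. ennreal (\<psi> y) \<partial>?B) = ennreal (\<Sum>n. w n * integral\<^sup>L (\<nu> n) \<psi>)" .
  show "integrable (measure_series w \<nu>) \<psi>"
    unfolding eq by (rule integrableI_nonneg) (use psiB psi nn in auto)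
  have s0: "(\<Sum>n. w n * integral\<^sup>L (\<nu> n) \<psi>) \<ge> 0"
    by (rule suminf_nonneg[OF sm2]) (use w I0 in auto)
  show "integral\<^sup>L (measure_series w \<nu>) \<psi> = (\<Sum>n. w n * integral\<^sup>L (\<nu> n) \<psi>)"
    unfolding eq by (subst integral_eq_nn_integral) (use psiB psi nn s0 in auto)
qed


lemma series_integral:
  fixes \<nu> :: "nat \<Rightarrow> real measure" and \<phi> :: "real \<Rightarrow> real"
  assumes w: "\<And>n. w n \<ge> 0"
    and nu: "\<And>n. subprob_space (\<nu> n)" "\<And>n. sets (\<nu> n) = sets borel"
    and phi: "\<phi> \<in> borel_measurable borel"
    and bnd: "\<And>n. AE y in \<nu> n. \<bar>\<phi> y\<bar> \<le> c n"
    and c: "\<And>n. c n \<ge> 0" and sm: "summable (\<lambda>n. w n * c n)"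
  shows "integral\<^sup>L (measure_series w \<nu>) \<phi> = (\<Sum>n. w n * integral\<^sup>L (\<nu> n) \<phi>)"
proof -
  let ?P = "\<lambda>y. max 0 (\<phi> y)" and ?Q = "\<lambda>y. max 0 (- \<phi> y)"
  have bP: "AE y in \<nu> n. ?P y \<le> c n" for n using bnd[of n] c[of n] by (auto elim!: AE_mp)
  have bQ: "AE y in \<nu> n. ?Q y \<le> c n" for n using bnd[of n] c[of n] by (auto elim!: AE_mp)
  note P = series_integral_nonneg[OF w nu _ _ bP c sm]
  note Q = series_integral_nonneg[OF w nu _ _ bQ c sm]
  have mP: "?P \<in> borel_measurable borel" "?Q \<in> borel_measurable borel" using phi by auto
  have phin: "\<phi> \<in> borel_measurable (\<nu> n)" for n using phi measurable_cong_sets[OF nu(2) refl] by blast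
  interpret S: subprob_space "\<nu> n" for n by (rule nu)
  have intn: "integrable (\<nu> n) ?P" "integrable (\<nu> n) ?Q" for n
    using bP[of n] bQ[of n] phin by (auto intro!: S.integrable_const_bound[where B="c n"] elim!: AE_mp)
  have dec: "\<phi> = (\<lambda>y. ?P y - ?Q y)" by (auto simp: max_def)
  have "integral\<^sup>L (measure_series w \<nu>) \<phi> = integral\<^sup>L (measure_series w \<nu>) ?P - integral\<^sup>L (measure_series w \<nu>) ?Q"
  proof -
    have "integral\<^sup>L (measure_series w \<nu>) (\<lambda>y. ?P y - ?Q y) = integral\<^sup>L (measure_series w \<nu>) ?P - integral\<^sup>L (measure_series w \<nu>) ?Q"
      by (rule Bochner_Integration.integral_diff) (use P(1) Q(1) mP in auto)
    then show ?thesis by (simp only: dec[symmetric])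
  qed
  also have "\<dots> = (\<Sum>n. w n * integral\<^sup>L (\<nu> n) ?P) - (\<Sum>n. w n * integral\<^sup>L (\<nu> n) ?Q)"
    using P(3) Q(3) mP by auto
  also have "\<dots> = (\<Sum>n. w n * integral\<^sup>L (\<nu> n) ?P - w n * integral\<^sup>L (\<nu> n) ?Q)"
    using suminf_diff[OF P(2) Q(2)] mP by simp
  also have "\<dots> = (\<Sum>n. w n * integral\<^sup>L (\<nu> n) \<phi>)"
  proof (rule suminf_cong)
    fix n
    have "integral\<^sup>L (\<nu> n) \<phi> = integral\<^sup>L (\<nu> n) ?P - integral\<^sup>L (\<nu> n) ?Q"
    proof -
      have "integral\<^sup>L (\<nu> n) (\<lambda>y. ?P y - ?Q y) = integral\<^sup>L (\<nu> n) ?P - integral\<^sup>L (\<nu> n) ?Q"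
        by (rule Bochner_Integration.integral_diff) (use intn in auto)
      then show ?thesis by (simp only: dec[symmetric])
    qed
    then show "w n * integral\<^sup>L (\<nu> n) ?P - w n * integral\<^sup>L (\<nu> n) ?Q = w n * integral\<^sup>L (\<nu> n) \<phi>"
      by (simp add: right_diff_distrib)
  qed
  finally show ?thesis .
qed


lemma conv_bound:
  fixes M N :: "real measure"
  assumes M: "prob_space M" "sets M = sets borel" and N: "prob_space N" "sets N = sets borel"
    and aM: "AE x in M. \<bar>x\<bar> \<le> r" and aN: "AE y in N. \<bar>y\<bar> \<le> s"
  shows "prob_space (convolution M N)" "sets (convolution M N) = sets borel"
    "AE z in convolution M N. \<bar>z\<bar> \<le> r + s"
proof -
  interpret P: pair_prob_space M N using M N by (simp add: pair_prob_space_def pair_sigma_finite_def prob_space_imp_sigma_finite)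
  have sP: "sets (M \<Otimes>\<^sub>M N) = sets (borel \<Otimes>\<^sub>M borel)"
    by (rule sets_pair_measure_cong[OF M(2) N(2)])
  have ms: "(\<lambda>(x, y). x + y) \<in> measurable (M \<Otimes>\<^sub>M N) (borel :: real measure)"
  proof -
    have "(\<lambda>p. fst p + snd p) \<in> measurable (borel \<Otimes>\<^sub>M borel) (borel :: real measure)" by measurable
    then show ?thesis by (subst measurable_cong_sets[OF sP refl]) (simp add: case_prod_beta')
  qed
  show "prob_space (convolution M N)" unfolding convolution_def
    by (rule prob_space.prob_space_distr[OF _ ms]) (rule P.P.prob_space_axioms)
  show "sets (convolution M N) = sets borel" unfolding convolution_def by simp
  have "AE p in M \<Otimes>\<^sub>M N. \<bar>fst p + snd p\<bar> \<le> r + s"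
  proof (rule P.AE_pair_measure)
    show "{x \<in> space (M \<Otimes>\<^sub>M N). \<bar>fst x + snd x\<bar> \<le> r + s} \<in> sets (M \<Otimes>\<^sub>M N)"
      using ms by (auto simp: case_prod_beta')
    show "AE x in M. AE y in N. \<bar>fst (x, y) + snd (x, y)\<bar> \<le> r + s"
    proof (rule AE_mp[OF aM], rule AE_I2, intro impI)
      fix x assume "\<bar>x\<bar> \<le> r"
      then show "AE y in N. \<bar>fst (x, y) + snd (x, y)\<bar> \<le> r + s"
        using aN by (auto elim!: AE_mp)
    qed
  qed
  then show "AE z in convolution M N. \<bar>z\<bar> \<le> r + s" unfolding convolution_def
    by (subst AE_distr_iff[OF ms]) (auto simp: case_prod_beta')
qed


lemma conv_pow_bound:
  assumes P: "prob_space \<rho>" "sets \<rho> = sets borel" and a: "AE y in \<rho>. \<bar>y\<bar> \<le> R"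
  shows "prob_space (conv_pow \<rho> n) \<and> sets (conv_pow \<rho> n) = sets borel \<and>
         (AE y in conv_pow \<rho> n. \<bar>y\<bar> \<le> real n * R)"
proof (induction n)
  case 0
  have "AE y in return borel (0::real). \<bar>y\<bar> \<le> 0" by (subst AE_return) auto
  moreover have "prob_space (return borel (0::real))" by (rule prob_space_return) simp
  ultimately show ?case by (simp only: conv_pow.simps) simp
next
  case (Suc n)
  then show ?case using conv_bound[OF P _ _ a, of "conv_pow \<rho> n" "real n * R"]
    by (simp only: conv_pow.simps) (auto simp: algebra_simps)
qed

lemma msupp_AE:
  assumes "sets \<rho> = sets borel"
  shows "AE y in \<rho>. y \<in> msupp \<rho>"
proof -
  let ?F = "{ball x e | x e. e > 0 \<and> emeasure \<rho> (ball x e) = 0}"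
  obtain F' where F': "F' \<subseteq> ?F" "countable F'" "\<Union>F' = \<Union>?F"
  proof (rule Lindelof)
    show "open S" if "S \<in> ?F" for S using that by auto
  qed
  have "\<Union>F' \<in> null_sets \<rho>"
  proof -
    have "(\<Union>B\<in>F'. B) \<in> null_sets \<rho>"
    proof (rule null_sets_UN')
      fix B assume "B \<in> F'"
      then have "B \<in> ?F" using F'(1) by (rule rev_subsetD)
      then obtain x e where xe: "B = ball x e" "emeasure \<rho> (ball x e) = 0" by blast
      have "ball x e \<in> sets \<rho>" unfolding assms by simp
      then show "B \<in> null_sets \<rho>" using xe by (simp add: null_sets_def)
    qed fact
    then show ?thesis by simp
  qed
  moreover have "{y \<in> space \<rho>. \<not> y \<in> msupp \<rho>} \<subseteq> \<Union>F'"
  proof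
    fix y assume "y \<in> {y \<in> space \<rho>. \<not> y \<in> msupp \<rho>}"
    then obtain e where "e > 0" "\<not> emeasure \<rho> (ball y e) > 0" unfolding msupp_def by auto
    then have "ball y e \<in> ?F" by (auto simp: not_less)
    then have "y \<in> \<Union>?F" using \<open>e > 0\<close> by (intro UnionI[of "ball y e"]) auto
    then show "y \<in> \<Union>F'" by (simp only: F'(3))
  qed
  ultimately show ?thesis by (rule AE_I')
qed

definition trigc :: "real \<Rightarrow> (real \<Rightarrow> complex) \<Rightarrow> bool" where
 "trigc T q \<longleftrightarrow> (\<exists>n::nat. \<exists>c::int \<Rightarrow> complex. \<forall>x. q x =
     (\<Sum>k\<in>{-int n..int n}. c k * exp (2 * pi * \<i> * of_int k * of_real x / of_real T)))"

lemma trigc_real: "T > 0 \<Longrightarrow> trigc T (\<lambda>x. complex_of_real (p x)) \<Longrightarrow> real_trig_poly p"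
  unfolding trigc_def real_trig_poly_def by blast

lemma trigc_const: "trigc T (\<lambda>x. a)"
  unfolding trigc_def by (rule exI[of _ 0], rule exI[of _ "\<lambda>k. a"]) simp

lemma sum_restrict_int:
  fixes f :: "int \<Rightarrow> complex"
  assumes "m \<le> n"
  shows "(\<Sum>k\<in>{-int n..int n}. (if k \<in> {-int m..int m} then f k else 0)) = (\<Sum>k\<in>{-int m..int m}. f k)"
  by (rule sum.mono_neutral_cong_right) (use assms in auto)

lemma trigc_add:
  assumes "trigc T p" "trigc T q" shows "trigc T (\<lambda>x. p x + q x)"
proof -
  let ?E = "\<lambda>k x. exp (2 * pi * \<i> * of_int k * of_real x / of_real T)"
  obtain n1 c1 where 1: "\<And>x. p x = (\<Sum>k\<in>{-int n1..int n1}. c1 k * ?E k x)" using assms(1) unfolding trigc_def by blast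
  obtain n2 c2 where 2: "\<And>x. q x = (\<Sum>k\<in>{-int n2..int n2}. c2 k * ?E k x)" using assms(2) unfolding trigc_def by blast
  let ?n = "max n1 n2"
  let ?c = "\<lambda>k. (if k \<in> {-int n1..int n1} then c1 k else 0) + (if k \<in> {-int n2..int n2} then c2 k else 0)"
  show ?thesis unfolding trigc_def
  proof (intro exI allI)
    fix x
    have "(\<Sum>k\<in>{-int ?n..int ?n}. ?c k * ?E k x) =
       (\<Sum>k\<in>{-int ?n..int ?n}. (if k \<in> {-int n1..int n1} then c1 k * ?E k x else 0)) +
       (\<Sum>k\<in>{-int ?n..int ?n}. (if k \<in> {-int n2..int n2} then c2 k * ?E k x else 0))"
      by (subst sum.distrib[symmetric], rule sum.cong) (auto simp: distrib_right)
    also have "\<dots> = p x + q x"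
      by (subst (1 2) sum_restrict_int) (auto simp: 1 2)
    finally show "p x + q x = (\<Sum>k\<in>{-int ?n..int ?n}. ?c k * ?E k x)" by simp
  qed
qed

lemma trigc_mult:
  assumes "trigc T p" "trigc T q" shows "trigc T (\<lambda>x. p x * q x)"
proof -
  let ?E = "\<lambda>k x. exp (2 * pi * \<i> * of_int k * of_real x / of_real T)"
  have E: "?E i x * ?E j x = ?E (i + j) x" for i j x
    by (simp add: exp_add[symmetric] add_divide_distrib distrib_left distrib_right mult.assoc)
  obtain n1 c1 where 1: "\<And>x. p x = (\<Sum>k\<in>{-int n1..int n1}. c1 k * ?E k x)" using assms(1) unfolding trigc_def by blast
  obtain n2 c2 where 2: "\<And>x. q x = (\<Sum>k\<in>{-int n2..int n2}. c2 k * ?E k x)" using assms(2) unfolding trigc_def by blast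
  let ?A1 = "{-int n1..int n1}" and ?A2 = "{-int n2..int n2}" and ?A = "{-int (n1+n2)..int (n1+n2)}"
  let ?c = "\<lambda>k. \<Sum>i\<in>?A1. \<Sum>j\<in>{j. j \<in> ?A2 \<and> i + j = k}. c1 i * c2 j"
  show ?thesis unfolding trigc_def
  proof (intro exI allI)
    fix x
    have "(\<Sum>k\<in>?A. ?c k * ?E k x) = (\<Sum>k\<in>?A. \<Sum>i\<in>?A1. \<Sum>j\<in>{j. j \<in> ?A2 \<and> i + j = k}. c1 i * c2 j * ?E (i + j) x)"
      by (auto simp: sum_distrib_right intro!: sum.cong)
    also have "\<dots> = (\<Sum>i\<in>?A1. \<Sum>k\<in>?A. \<Sum>j\<in>{j. j \<in> ?A2 \<and> i + j = k}. c1 i * c2 j * ?E (i + j) x)"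
      by (rule sum.swap)
    also have "\<dots> = (\<Sum>i\<in>?A1. \<Sum>j\<in>?A2. c1 i * c2 j * ?E (i + j) x)"
    proof (rule sum.cong[OF refl])
      fix i assume "i \<in> ?A1"
      then show "(\<Sum>k\<in>?A. \<Sum>j\<in>{j. j \<in> ?A2 \<and> i + j = k}. c1 i * c2 j * ?E (i + j) x) = (\<Sum>j\<in>?A2. c1 i * c2 j * ?E (i + j) x)"
        by (intro sum.group) auto
    qed
    also have "\<dots> = p x * q x"
      unfolding 1 2 sum_product
    proof (intro sum.cong refl)
      fix i j
      show "c1 i * c2 j * ?E (i + j) x = c1 i * ?E i x * (c2 j * ?E j x)"
        by (subst E[symmetric]) (simp only: mult_ac)
    qed
    finally show "p x * q x = (\<Sum>k\<in>?A. ?c k * ?E k x)" by simp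
  qed
qed


lemma E_cis: "exp (2 * pi * \<i> * of_int k * of_real x / of_real T) = cis (real_of_int k * (2 * pi * x / T))"
  by (simp add: cis_conv_exp mult_ac)

lemma trigc_linear:
  fixes l :: "complex \<Rightarrow> real"
  assumes "bounded_linear l"
  shows "trigc T (\<lambda>x. complex_of_real (l (exp (2 * pi * \<i> * of_real x / of_real T))))"
proof -
  interpret L: bounded_linear l by fact
  let ?a = "l 1" and ?b = "l \<i>"
  have lz: "l z = Re z * ?a + Im z * ?b" for z
  proof -
    have "z = Re z *\<^sub>R 1 + Im z *\<^sub>R \<i>" by (simp add: complex_eq_iff)
    then have "l z = l (Re z *\<^sub>R 1 + Im z *\<^sub>R \<i>)" by simp
    also have "\<dots> = Re z * ?a + Im z * ?b" by (simp add: L.add L.scaleR)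
    finally show ?thesis .
  qed
  let ?c = "\<lambda>k::int. if k = 1 then (complex_of_real ?a - \<i> * complex_of_real ?b) / 2
     else if k = -1 then (complex_of_real ?a + \<i> * complex_of_real ?b) / 2 else 0"
  show ?thesis unfolding trigc_def
  proof (intro exI[of _ "1::nat"] exI[of _ ?c] allI)
    fix x
    define t where "t = 2 * pi * x / T"
    have ex: "exp (2 * pi * \<i> * of_real x / of_real T) = cis t"
      using E_cis[of 1 x T] by (simp add: t_def)
    have set: "{- int 1..int 1} = {-1, 0, 1::int}" by auto
    have "(\<Sum>k\<in>{- int 1..int 1}. ?c k * exp (2 * pi * \<i> * of_int k * of_real x / of_real T)) =
       ?c (-1) * cis (- t) + ?c 1 * cis t"
      unfolding set E_cis t_def by simp
    also have "\<dots> = complex_of_real (cos t * ?a + sin t * ?b)"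
      by (simp add: complex_eq_iff cis.ctr algebra_simps add_divide_distrib[symmetric])
    finally show "complex_of_real (l (exp (2 * pi * \<i> * of_real x / of_real T))) =
       (\<Sum>k\<in>{- int 1..int 1}. ?c k * exp (2 * pi * \<i> * of_int k * of_real x / of_real T))"
      unfolding ex lz[of "cis t"] by simp
  qed
qed

lemma trigc_poly:
  fixes g :: "complex \<Rightarrow> real"
  assumes "real_polynomial_function g"
  shows "trigc T (\<lambda>x. complex_of_real (g (exp (2 * pi * \<i> * of_real x / of_real T))))"
  using assms
proof (induction g rule: real_polynomial_function.induct)
  case (linear f) then show ?case by (rule trigc_linear)
next
  case (const c) then show ?case using trigc_const by simp
next
  case (add f g) then show ?case using trigc_add[OF add.IH] by simp
next
  case (mult f g) then show ?case using trigc_mult[OF mult.IH] by simp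
qed

lemma cosh_mono_abs: "\<bar>u\<bar> \<le> \<bar>v\<bar> \<Longrightarrow> cosh u \<le> cosh (v::real)"
  by (metis abs_ge_zero cosh_real_abs cosh_real_nonneg_le_iff)

lemma trig_approx:
  fixes f :: "real \<Rightarrow> real" and k :: nat
  assumes fc: "continuous_on UNIV f" and a: "a > 0" and fb: "\<And>x. \<bar>f x\<bar> \<le> a * cosh (b * x)"
  shows "\<exists>p. real_trig_poly p \<and> continuous_on UNIV p \<and>
     (\<forall>y. \<bar>y\<bar> \<le> real k \<longrightarrow> \<bar>p y - f y\<bar> < 1 / (real k + 1)) \<and>
     (\<forall>y. \<bar>p y\<bar> \<le> a * cosh (b * (\<bar>y\<bar> + 1)) + 1)"
proof -
  define T where "T = 4 * (real k + 1)"
  have T: "T > 0" by (simp add: T_def)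
  define h where "h z = T / (2 * pi) * arcsin (Im z)" for z :: complex
  define \<Psi> where "\<Psi> z = f (h z)" for z
  let ?S = "sphere (0::complex) 1"
  have imS: "Im ` ?S \<subseteq> {-1..1}"
  proof
    fix u assume "u \<in> Im ` ?S"
    then obtain w :: complex where "norm w = 1" "u = Im w" by auto
    then show "u \<in> {-1..1}" using abs_Im_le_cmod[of w] unfolding abs_le_iff atLeastAtMost_iff by linarith
  qed
  have "continuous_on ?S (\<lambda>z. arcsin (Im z))"
    by (rule continuous_on_compose2[OF continuous_on_arcsin' _ imS]) (intro continuous_intros)
  then have "continuous_on ?S h" unfolding h_def by (rule continuous_on_mult[OF continuous_on_const])
  then have cP: "continuous_on ?S \<Psi>" unfolding \<Psi>_def
    by (rule continuous_on_compose2[OF fc]) auto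
  obtain g where g: "polynomial_function g" "\<forall>z\<in>?S. norm (\<Psi> z - g z) < 1 / (real k + 1)"
    using Stone_Weierstrass_polynomial_function[OF compact_sphere cP, of "1 / (real k + 1)"] by (metis divide_pos_pos of_nat_0_le_iff zero_less_one add_nonneg_pos)
  define z where "z y = exp (2 * pi * \<i> * of_real y / of_real T)" for y
  define p where "p y = g (z y)" for y
  have zc: "z y = cis (2 * pi * y / T)" for y using E_cis[of 1 y T] by (simp add: z_def)
  have zS: "z y \<in> ?S" for y by (simp add: zc)
  have hz_bound: "\<bar>h (z y)\<bar> \<le> real k + 1" for y
  proof -
    have "\<bar>arcsin (Im (z y))\<bar> \<le> pi / 2"
    proof -
      have "Im (z y) \<in> {-1..1}" using imS zS[of y] by blast
      then show ?thesis using arcsin_bounded[of "Im (z y)"] by (auto simp: abs_le_iff)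
    qed
    then have "\<bar>h (z y)\<bar> \<le> T / (2 * pi) * (pi / 2)"
    proof -
      have "\<bar>h (z y)\<bar> = T / (2 * pi) * \<bar>arcsin (Im (z y))\<bar>"
        unfolding h_def using T by (simp add: abs_mult)
      also have "\<dots> \<le> T / (2 * pi) * (pi / 2)"
        by (rule mult_left_mono) (use T \<open>\<bar>arcsin (Im (z y))\<bar> \<le> pi / 2\<close> in auto)
      finally show ?thesis .
    qed
    also have "\<dots> = real k + 1" by (simp add: T_def field_simps)
    finally show ?thesis .
  qed
  have hz_eq: "h (z y) = y" if "\<bar>y\<bar> \<le> real k" for y
  proof -
    have "\<bar>2 * pi * y / T\<bar> \<le> pi / 2"
    proof -
      have "\<bar>2 * pi * y / T\<bar> = 2 * pi * \<bar>y\<bar> / T" using T by (simp add: abs_mult)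
      also have "\<dots> \<le> 2 * pi * (real k + 1) / T"
        using that T by (intro divide_right_mono mult_left_mono) auto
      also have "\<dots> = pi / 2" using pi_gt_zero by (simp add: T_def field_simps)
      finally show ?thesis .
    qed
    then have "arcsin (sin (2 * pi * y / T)) = 2 * pi * y / T"
      unfolding abs_le_iff by (intro arcsin_sin) linarith+
    then show ?thesis using T pi_gt_zero unfolding h_def zc by (simp add: field_simps)
  qed
  have hz_abs: "\<bar>h (z y)\<bar> \<le> \<bar>y\<bar> + 1" for y
  proof (cases "\<bar>y\<bar> \<le> real k")
    case True then show ?thesis using hz_eq[of y] by simp
  next
    case False then show ?thesis using hz_bound[of y] by simp
  qed
  have close: "\<bar>p y - \<Psi> (z y)\<bar> < 1 / (real k + 1)" for y
  proof -
    have "norm (\<Psi> (z y) - g (z y)) < 1 / (real k + 1)" using g(2) zS[of y] by blast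
    then show ?thesis by (simp add: p_def abs_minus_commute)
  qed
  show ?thesis
  proof (intro exI[of _ p] conjI allI impI)
    have "real_polynomial_function g" using g(1) real_polynomial_function_eq by blast
    from trigc_poly[OF this, of T] show "real_trig_poly p"
      by (intro trigc_real[OF T]) (simp add: p_def z_def)
    show "continuous_on UNIV p" unfolding p_def z_def
      by (rule continuous_on_compose2[OF continuous_on_polymonial_function[OF g(1)]]) (use T in \<open>auto intro!: continuous_intros\<close>)
  next
    fix y :: real assume "\<bar>y\<bar> \<le> real k"
    then show "\<bar>p y - f y\<bar> < 1 / (real k + 1)" using close[of y] hz_eq[of y] by (simp add: \<Psi>_def)
  next
    fix y
    have "\<bar>p y\<bar> \<le> \<bar>\<Psi> (z y)\<bar> + 1"
    proof -
      have "1 / (real k + 1) \<le> 1" by simp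
      then show ?thesis using close[of y] by linarith
    qed
    also have "\<bar>\<Psi> (z y)\<bar> \<le> a * cosh (b * h (z y))" by (simp add: \<Psi>_def fb)
    also have "\<dots> \<le> a * cosh (b * (\<bar>y\<bar> + 1))"
      using a hz_abs[of y] by (intro mult_left_mono cosh_mono_abs) (auto simp: abs_mult mult_left_mono)
    finally show "\<bar>p y\<bar> \<le> a * cosh (b * (\<bar>y\<bar> + 1)) + 1" by simp
  qed
qed

lemma int_diff_bound:
  fixes g h :: "real \<Rightarrow> real"
  assumes P: "prob_space M" and gm: "g \<in> borel_measurable M" and hm: "h \<in> borel_measurable M"
    and bg: "AE y in M. \<bar>g y\<bar> \<le> c1" and bh: "AE y in M. \<bar>h y\<bar> \<le> c1"
    and d: "AE y in M. \<bar>g y - h y\<bar> \<le> c"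
  shows "\<bar>integral\<^sup>L M g - integral\<^sup>L M h\<bar> \<le> c"
proof -
  interpret prob_space M by fact
  have ig: "integrable M g" by (rule integrable_const_bound[where B=c1]) (use bg gm in auto)
  have ih: "integrable M h" by (rule integrable_const_bound[where B=c1]) (use bh hm in auto)
  have "\<bar>integral\<^sup>L M g - integral\<^sup>L M h\<bar> = \<bar>integral\<^sup>L M (\<lambda>y. g y - h y)\<bar>"
    using ig ih by simp
  also have "\<dots> \<le> integral\<^sup>L M (\<lambda>y. \<bar>g y - h y\<bar>)"
    using integral_norm_bound[of M "\<lambda>y. g y - h y"] by simp
  also have "\<dots> \<le> integral\<^sup>L M (\<lambda>y. c)"
    by (rule integral_mono_AE) (use ig ih d in auto)
  also have "\<dots> = c" by (simp add: prob_space)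
  finally show ?thesis .
qed


lemma int_bound:
  fixes g :: "real \<Rightarrow> real"
  assumes P: "prob_space M" and gm: "g \<in> borel_measurable M" and bg: "AE y in M. \<bar>g y\<bar> \<le> c"
  shows "\<bar>integral\<^sup>L M g\<bar> \<le> c"
proof -
  interpret prob_space M by fact
  have ig: "integrable M g" by (rule integrable_const_bound[where B=c]) (use bg gm in auto)
  have "\<bar>integral\<^sup>L M g\<bar> \<le> integral\<^sup>L M (\<lambda>y. \<bar>g y\<bar>)"
    using integral_norm_bound[of M g] by simp
  also have "\<dots> \<le> integral\<^sup>L M (\<lambda>y. c)"
    by (rule integral_mono_AE) (use ig bg in auto)
  also have "\<dots> = c" by (simp add: prob_space)
  finally show ?thesis .
qed

lemma rewrite_series:
  fixes M :: "nat \<Rightarrow> real measure" and u \<phi> :: "real \<Rightarrow> real"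
  assumes w: "\<And>n. w n \<ge> 0" "summable w"
    and MP: "\<And>n. prob_space (M n)" "\<And>n. sets (M n) = sets borel"
    and Mb: "\<And>n. AE y in M n. \<bar>y\<bar> \<le> (real n + 1) * R"
    and um: "u \<in> borel_measurable borel"
    and Cb: "\<And>n y. \<bar>y\<bar> \<le> (real n + 1) * R \<Longrightarrow> \<bar>u y\<bar> \<le> C n"
    and C: "\<And>n. C n \<ge> 0" "summable (\<lambda>n. w n * C n)"
    and phi: "\<phi> \<in> borel_measurable borel" "\<And>t. \<bar>\<phi> t\<bar> \<le> A * \<bar>t\<bar> + B" "A \<ge> 0" "B \<ge> 0"
  shows "integral\<^sup>L (measure_series w (\<lambda>n. distr (M n) borel (hfun u (n + 1)))) \<phi> =
      (\<Sum>n. w n * integral\<^sup>L (M n) (\<lambda>y. \<phi> (u y / (real n + 1))))"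
    "\<And>n. AE y in M n. \<bar>\<phi> (u y / (real n + 1))\<bar> \<le> A * C n + B"
    "(\<lambda>y. \<phi> (u y / (real n + 1))) \<in> borel_measurable (M n)"
proof -
  have hm: "hfun u (n + 1) \<in> measurable (M n) borel" for n
    using um measurable_cong_sets[OF MP(2) refl] unfolding hfun_def by (simp add: measurable_cong_sets[OF MP(2) refl])
  show bnd: "AE y in M n. \<bar>\<phi> (u y / (real n + 1))\<bar> \<le> A * C n + B" for n
  proof (rule AE_mp[OF Mb[of n]], rule AE_I2, intro impI)
    fix y assume "\<bar>y\<bar> \<le> (real n + 1) * R"
    then have uy: "\<bar>u y\<bar> \<le> C n" by (rule Cb)
    have "\<bar>u y / (real n + 1)\<bar> \<le> \<bar>u y\<bar>" by (simp add: divide_le_eq abs_divide) (simp add: algebra_simps)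
    then have "\<bar>u y / (real n + 1)\<bar> \<le> C n" using uy by linarith
    then have "A * \<bar>u y / (real n + 1)\<bar> \<le> A * C n" by (rule mult_left_mono[OF _ phi(3)])
    then show "\<bar>\<phi> (u y / (real n + 1))\<bar> \<le> A * C n + B" using phi(2)[of "u y / (real n + 1)"] by linarith
  qed
  show "(\<lambda>y. \<phi> (u y / (real n + 1))) \<in> borel_measurable (M n)" for n
    using measurable_comp[OF hm[of n] phi(1)] by (simp add: hfun_def o_def add.commute)
  have "integral\<^sup>L (measure_series w (\<lambda>n. distr (M n) borel (hfun u (n + 1)))) \<phi> =
      (\<Sum>n. w n * integral\<^sup>L (distr (M n) borel (hfun u (n + 1))) \<phi>)"
  proof (rule series_integral[where c="\<lambda>n. A * C n + B"])
    fix n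
    show "subprob_space (distr (M n) borel (hfun u (n + 1)))"
      using prob_space.prob_space_distr[OF MP(1) hm] by (simp add: prob_space_imp_subprob_space)
    show "sets (distr (M n) borel (hfun u (n + 1))) = sets borel" by simp
    show "AE y in distr (M n) borel (hfun u (n + 1)). \<bar>\<phi> y\<bar> \<le> A * C n + B"
      using bnd[of n] by (subst AE_distr_iff[OF hm]) (use phi(1) in \<open>auto simp: hfun_def add.commute\<close>)
    show "A * C n + B \<ge> 0" using C(1)[of n] phi(3,4) by simp
  next
    show "summable (\<lambda>n. w n * (A * C n + B))"
      using summable_add[OF summable_mult[OF C(2), of A] summable_mult2[OF w(2), of B]]
      by (simp add: algebra_simps)
  qed (use w phi in auto)
  also have "\<dots> = (\<Sum>n. w n * integral\<^sup>L (M n) (\<lambda>y. \<phi> (u y / (real n + 1))))"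
    by (subst integral_distr[OF hm phi(1)]) (simp add: hfun_def add.commute)
  finally show "integral\<^sup>L (measure_series w (\<lambda>n. distr (M n) borel (hfun u (n + 1)))) \<phi> =
      (\<Sum>n. w n * integral\<^sup>L (M n) (\<lambda>y. \<phi> (u y / (real n + 1))))" .
qed


lemma main_conv:
  fixes M :: "'x \<Rightarrow> nat \<Rightarrow> real measure" and p :: "nat \<Rightarrow> real \<Rightarrow> real" and f \<phi> :: "real \<Rightarrow> real"
  assumes w: "\<And>n. w n \<ge> 0" "summable w"
    and MP: "\<And>x n. x \<in> X \<Longrightarrow> prob_space (M x n)" "\<And>x n. x \<in> X \<Longrightarrow> sets (M x n) = sets borel"
    and Mb: "\<And>x n. x \<in> X \<Longrightarrow> AE y in M x n. \<bar>y\<bar> \<le> (real n + 1) * R"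
    and R: "R \<ge> 0"
    and fm: "f \<in> borel_measurable borel" and pm: "\<And>k. p k \<in> borel_measurable borel"
    and Cf: "\<And>n y. \<bar>y\<bar> \<le> (real n + 1) * R \<Longrightarrow> \<bar>f y\<bar> \<le> C n"
    and Cp: "\<And>k n y. \<bar>y\<bar> \<le> (real n + 1) * R \<Longrightarrow> \<bar>p k y\<bar> \<le> C n"
    and C: "\<And>n. C n \<ge> 0" "summable (\<lambda>n. w n * C n)"
    and pf: "\<And>k y. \<bar>y\<bar> \<le> real k \<Longrightarrow> \<bar>p k y - f y\<bar> < 1 / (real k + 1)"
    and phi: "\<phi> \<in> borel_measurable borel" "uniformly_continuous_on UNIV \<phi>"
      "\<And>t. \<bar>\<phi> t\<bar> \<le> A * \<bar>t\<bar> + B" "A \<ge> 0" "B \<ge> 0"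
  shows "uniform_limit X
     (\<lambda>k x. integral\<^sup>L (measure_series w (\<lambda>n. distr (M x n) borel (hfun (p k) (n + 1)))) \<phi>)
     (\<lambda>x. integral\<^sup>L (measure_series w (\<lambda>n. distr (M x n) borel (hfun f (n + 1)))) \<phi>) sequentially"
proof (rule uniform_limitI)
  fix e :: real assume e: "e > 0"
  define W where "W = suminf w"
  have W: "W \<ge> 0" unfolding W_def by (rule suminf_nonneg[OF w(2) w(1)])
  define e' where "e' = e / (4 * (W + 1))"
  have e': "e' > 0" using e W by (simp add: e'_def)
  obtain \<delta> where \<delta>: "\<delta> > 0" "\<And>s t. dist s t < \<delta> \<Longrightarrow> dist (\<phi> s) (\<phi> t) < e'"
    using phi(2) e' unfolding uniformly_continuous_on_def by (metis UNIV_I)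
  define D where "D n = 2 * (A * C n + B)" for n
  have D0: "D n \<ge> 0" for n using C(1)[of n] phi(4,5) by (simp add: D_def)
  have smD: "summable (\<lambda>n. w n * D n)"
    using summable_add[OF summable_mult[OF C(2), of "2 * A"] summable_mult2[OF w(2), of "2 * B"]]
    by (simp add: D_def algebra_simps)
  obtain N0 where N0: "\<And>n. n \<ge> N0 \<Longrightarrow> norm (\<Sum>i. w (i + n) * D (i + n)) < e / 4"
    using suminf_exist_split[OF _ smD, of "e / 4"] e by auto
  define K where "K = nat \<lceil>(real N0 + 1) * R + 1 / \<delta>\<rceil>"
  have K: "real K \<ge> (real N0 + 1) * R + 1 / \<delta>" unfolding K_def by linarith
  show "\<forall>\<^sub>F k in sequentially. \<forall>x\<in>X. dist
     (integral\<^sup>L (measure_series w (\<lambda>n. distr (M x n) borel (hfun (p k) (n + 1)))) \<phi>)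
     (integral\<^sup>L (measure_series w (\<lambda>n. distr (M x n) borel (hfun f (n + 1)))) \<phi>) < e"
    unfolding eventually_sequentially
  proof (intro exI[of _ K] allI impI ballI)
    fix k x assume k: "k \<ge> K" and x: "x \<in> X"
    have kK: "real k \<ge> (real N0 + 1) * R + 1 / \<delta>" using k K by linarith
    have kd: "1 / (real k + 1) < \<delta>"
    proof -
      have "1 / \<delta> < real k + 1" using kK R by (smt (verit) mult_nonneg_nonneg of_nat_0_le_iff)
      then show ?thesis using \<delta>(1) by (simp add: field_simps)
    qed
    note RWp = rewrite_series[OF w MP(1)[OF x] MP(2)[OF x] Mb[OF x] pm[of k] Cp[where k=k] C phi(1,3,4,5)]
    note RWf = rewrite_series[OF w MP(1)[OF x] MP(2)[OF x] Mb[OF x] fm Cf C phi(1,3,4,5)]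
    define a where "a n = integral\<^sup>L (M x n) (\<lambda>y. \<phi> (p k y / (real n + 1)))" for n
    define b where "b n = integral\<^sup>L (M x n) (\<lambda>y. \<phi> (f y / (real n + 1)))" for n
    define en where "en n = (if n < N0 then e' else D n)" for n
    have ab: "\<bar>a n - b n\<bar> \<le> en n" for n
      unfolding a_def b_def
    proof (rule int_diff_bound[OF MP(1)[OF x] RWp(3) RWf(3) RWp(2) RWf(2)])
      show "AE y in M x n. \<bar>\<phi> (p k y / (real n + 1)) - \<phi> (f y / (real n + 1))\<bar> \<le> en n"
      proof (rule AE_mp[OF Mb[OF x, of n]], rule AE_I2, intro impI)
        fix y assume y: "\<bar>y\<bar> \<le> (real n + 1) * R"
        show "\<bar>\<phi> (p k y / (real n + 1)) - \<phi> (f y / (real n + 1))\<bar> \<le> en n"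
        proof (cases "n < N0")
          case True
          have "(real n + 1) * R \<le> (real N0 + 1) * R" using True R by (intro mult_right_mono) auto
          also have "\<dots> \<le> real k" using kK \<delta>(1) by (smt (verit) divide_pos_pos zero_less_one)
          finally have "\<bar>y\<bar> \<le> real k" using y by linarith
          then have "\<bar>p k y - f y\<bar> < \<delta>" using pf[of y k] kd by linarith
          moreover have "\<bar>p k y / (real n + 1) - f y / (real n + 1)\<bar> \<le> \<bar>p k y - f y\<bar>"
            by (simp add: diff_divide_distrib[symmetric] abs_divide divide_le_eq) (simp add: algebra_simps)
          ultimately have "dist (p k y / (real n + 1)) (f y / (real n + 1)) < \<delta>"
            by (simp add: dist_real_def)
          then have "dist (\<phi> (p k y / (real n + 1))) (\<phi> (f y / (real n + 1))) < e'" by (rule \<delta>(2))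
          then show ?thesis using True by (simp add: en_def dist_real_def)
        next
          case False
          have bp: "\<bar>\<phi> (p k y / (real n + 1))\<bar> \<le> A * C n + B"
          proof -
            have "\<bar>p k y / (real n + 1)\<bar> \<le> C n"
              using Cp[OF y, of k] by (simp add: abs_divide divide_le_eq) (smt (verit) C(1) mult_le_cancel_left1 of_nat_0_le_iff)
            then show ?thesis using phi(3)[of "p k y / (real n + 1)"] mult_left_mono[OF _ phi(4)] by smt
          qed
          have bf: "\<bar>\<phi> (f y / (real n + 1))\<bar> \<le> A * C n + B"
          proof -
            have "\<bar>f y / (real n + 1)\<bar> \<le> C n"
              using Cf[OF y] by (simp add: abs_divide divide_le_eq) (smt (verit) C(1) mult_le_cancel_left1 of_nat_0_le_iff)
            then show ?thesis using phi(3)[of "f y / (real n + 1)"] mult_left_mono[OF _ phi(4)] by smt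
          qed
          show ?thesis using False bp bf by (simp add: en_def D_def)
        qed
      qed
    qed
    have en0: "en n \<ge> 0" for n using e' D0 by (simp add: en_def)
    have smE: "summable (\<lambda>n. w n * en n)"
    proof (rule summable_comparison_test[OF _ summable_add[OF summable_mult2[OF w(2), of e'] smD]])
      show "\<exists>N. \<forall>n\<ge>N. norm (w n * en n) \<le> w n * e' + w n * D n"
        using w(1) e' D0 en0 by (auto simp: en_def intro!: exI[of _ 0])
    qed
    have smc: "summable (\<lambda>n. w n * (A * C n + B))"
      using summable_add[OF summable_mult[OF C(2), of A] summable_mult2[OF w(2), of B]]
      by (simp add: algebra_simps)
    have sa: "summable (\<lambda>n. w n * a n)"
    proof (rule summable_comparison_test[OF _ smc])
      have "\<bar>a n\<bar> \<le> A * C n + B" for n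
        unfolding a_def by (rule int_bound[OF MP(1)[OF x] RWp(3) RWp(2)])
      then show "\<exists>N. \<forall>n\<ge>N. norm (w n * a n) \<le> w n * (A * C n + B)"
        using w(1) by (auto simp: abs_mult intro!: exI[of _ 0] mult_left_mono)
    qed
    have sb: "summable (\<lambda>n. w n * b n)"
    proof (rule summable_comparison_test[OF _ smc])
      have "\<bar>b n\<bar> \<le> A * C n + B" for n
        unfolding b_def by (rule int_bound[OF MP(1)[OF x] RWf(3) RWf(2)])
      then show "\<exists>N. \<forall>n\<ge>N. norm (w n * b n) \<le> w n * (A * C n + B)"
        using w(1) by (auto simp: abs_mult intro!: exI[of _ 0] mult_left_mono)
    qed
    have dle: "\<bar>w n * a n - w n * b n\<bar> \<le> w n * en n" for n
    proof -
      have "\<bar>w n * a n - w n * b n\<bar> = w n * \<bar>a n - b n\<bar>"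
        using w(1)[of n] by (simp add: right_diff_distrib[symmetric] abs_mult)
      also have "\<dots> \<le> w n * en n" using ab[of n] w(1)[of n] by (rule mult_left_mono)
      finally show ?thesis .
    qed
    have sd: "summable (\<lambda>n. \<bar>w n * a n - w n * b n\<bar>)"
      by (rule summable_comparison_test[OF _ smE]) (use dle in \<open>auto intro!: exI[of _ 0]\<close>)
    have "dist (\<Sum>n. w n * a n) (\<Sum>n. w n * b n) = \<bar>\<Sum>n. w n * a n - w n * b n\<bar>"
      using suminf_diff[OF sa sb] by (simp add: dist_real_def)
    also have "\<dots> \<le> (\<Sum>n. \<bar>w n * a n - w n * b n\<bar>)"
      by (rule summable_rabs) (use sd in simp)
    also have "\<dots> \<le> (\<Sum>n. w n * en n)"
      by (rule suminf_le[OF dle sd smE])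
    also have "\<dots> < e"
    proof -
      have "(\<Sum>n. w n * en n) = (\<Sum>i. w (i + N0) * en (i + N0)) + (\<Sum>i<N0. w i * en i)"
        by (rule suminf_split_initial_segment[OF smE])
      also have "(\<Sum>i. w (i + N0) * en (i + N0)) = (\<Sum>i. w (i + N0) * D (i + N0))"
        by (simp add: en_def)
      also have "(\<Sum>i<N0. w i * en i) = e' * (\<Sum>i<N0. w i)"
        by (simp add: en_def sum_distrib_left mult.commute)
      also have "(\<Sum>i. w (i + N0) * D (i + N0)) < e / 4"
        using N0[of N0] by simp
      also have "e' * (\<Sum>i<N0. w i) \<le> e' * W"
        unfolding W_def using e' by (intro mult_left_mono sum_le_suminf[OF w(2)]) (auto simp: w(1))
      also have "e' * W \<le> e / 4"
      proof -
        have "e' * W = e / 4 * (W / (W + 1))" using W by (simp add: e'_def field_simps)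
        also have "\<dots> \<le> e / 4 * 1" using e W by (intro mult_left_mono) auto
        finally show ?thesis by simp
      qed
      finally show ?thesis using e by linarith
    qed
    finally show "dist
     (integral\<^sup>L (measure_series w (\<lambda>n. distr (M x n) borel (hfun (p k) (n + 1)))) \<phi>)
     (integral\<^sup>L (measure_series w (\<lambda>n. distr (M x n) borel (hfun f (n + 1)))) \<phi>) < e"
      using RWp(1) RWf(1) by (simp add: a_def b_def)
  qed
qed

lemma test_fun_props:
  fixes g :: "real \<Rightarrow> real"
  assumes gc: "continuous_on UNIV g" and gs: "compact (closure {y. g y \<noteq> 0})"
  shows "uniformly_continuous_on UNIV g" "\<exists>B\<ge>0. \<forall>t. \<bar>g t\<bar> \<le> B"
proof -
  have "bounded (closure {y. g y \<noteq> 0})" by (rule compact_imp_bounded[OF gs])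
  then obtain L where L0: "\<forall>x\<in>closure {y. g y \<noteq> 0}. \<bar>x\<bar> \<le> L"
    unfolding bounded_real by blast
  have L: "\<bar>x\<bar> \<le> L" if "x \<in> closure {y. g y \<noteq> 0}" for x using L0 that by blast
  have out: "g t = 0" if "\<bar>t\<bar> > L" for t
  proof (rule ccontr)
    assume "g t \<noteq> 0"
    then have "t \<in> closure {y. g y \<noteq> 0}" by (intro closure_subset[THEN subsetD]) simp
    then have "\<bar>t\<bar> \<le> L" by (rule L)
    then show False using that by linarith
  qed
  let ?K = "{-L-1..L+1}"
  have uK: "uniformly_continuous_on ?K g"
    by (rule compact_uniformly_continuous[OF continuous_on_subset[OF gc subset_UNIV] compact_Icc])
  show "uniformly_continuous_on UNIV g"
    unfolding uniformly_continuous_on_def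
  proof (intro allI impI)
    fix e :: real assume e: "e > 0"
    have "\<exists>d>0. \<forall>x\<in>?K. \<forall>x'\<in>?K. dist x' x < d \<longrightarrow> dist (g x') (g x) < e"
      using uK e unfolding uniformly_continuous_on_def by blast
    then obtain d where d: "d > 0" "\<And>x x'. x \<in> ?K \<Longrightarrow> x' \<in> ?K \<Longrightarrow> dist x' x < d \<Longrightarrow> dist (g x') (g x) < e"
      by blast
    show "\<exists>d>0. \<forall>x\<in>UNIV. \<forall>x'\<in>UNIV. dist x' x < d \<longrightarrow> dist (g x') (g x) < e"
    proof (intro exI[of _ "min d 1"] conjI ballI impI)
      show "min d 1 > 0" using d by simp
      fix x x' :: real assume xx: "dist x' x < min d 1"
      show "dist (g x') (g x) < e"
      proof (cases "x \<in> ?K \<and> x' \<in> ?K")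
        case True
        have "dist x' x < d" using xx by linarith
        then show ?thesis using d(2)[of x x'] True by blast
      next
        case False
        have "\<bar>x' - x\<bar> < 1" using xx by (simp add: dist_real_def)
        then have "\<bar>x\<bar> > L \<and> \<bar>x'\<bar> > L" using False unfolding atLeastAtMost_iff de_Morgan_conj not_le by (elim disjE) (simp_all add: abs_if split: if_splits; linarith)+
        then show ?thesis using out e by simp
      qed
    qed
  qed
  have "compact (g ` ?K)" by (rule compact_continuous_image[OF continuous_on_subset[OF gc subset_UNIV] compact_Icc])
  then have "bounded (g ` ?K)" by (rule compact_imp_bounded)
  then obtain B where B0: "\<forall>u\<in>g ` ?K. \<bar>u\<bar> \<le> B" unfolding bounded_real by blast
  have B: "\<bar>g t\<bar> \<le> B" if "t \<in> ?K" for t using B0 that by blast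
  show "\<exists>B\<ge>0. \<forall>t. \<bar>g t\<bar> \<le> B"
  proof (intro exI[of _ "max B 0"] conjI allI)
    fix t show "\<bar>g t\<bar> \<le> max B 0"
    proof (cases "t \<in> ?K")
      case True then show ?thesis using B[of t] by linarith
    next
      case False then have "\<bar>t\<bar> > L" unfolding atLeastAtMost_iff de_Morgan_conj not_le by linarith
      then show ?thesis using out by simp
    qed
  qed simp
qed

lemma cosh_le_exp_abs: "cosh (t::real) \<le> exp \<bar>t\<bar>"
proof -
  have "cosh t = (exp t + exp (- t)) / 2" by (simp add: cosh_def)
  also have "\<dots> \<le> exp \<bar>t\<bar>" by (cases "t \<ge> 0") auto
  finally show ?thesis .
qed

lemma summable_weights:
  assumes lam: "lam > 0" and a: "a > 0" and R: "R \<ge> 0"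
  shows "summable (\<lambda>n. poisson_weight lam n * (a * cosh (b * ((real n + 1) * R + 1)) + 1))"
    "summable (poisson_weight lam)"
proof -
  define q where "q = exp (\<bar>b\<bar> * R)"
  define K where "K = a * exp (\<bar>b\<bar> * (R + 1))"
  have s1: "summable (\<lambda>n. inverse (fact n) * (lam * q) ^ n)" by (rule summable_exp)
  have s2: "summable (\<lambda>n. inverse (fact n) * lam ^ n)" by (rule summable_exp)
  have sE: "summable (\<lambda>n. exp (- lam) * K * (inverse (fact n) * (lam * q) ^ n) + exp (- lam) * (inverse (fact n) * lam ^ n))"
    by (intro summable_add summable_mult s1 s2)
  have w0: "poisson_weight lam n \<ge> 0" for n using lam by (simp add: poisson_weight_def)
  have bnd: "poisson_weight lam n * (a * cosh (b * ((real n + 1) * R + 1)) + 1) \<le>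
      exp (- lam) * K * (inverse (fact n) * (lam * q) ^ n) + exp (- lam) * (inverse (fact n) * lam ^ n)" for n
  proof -
    have "cosh (b * ((real n + 1) * R + 1)) \<le> exp (\<bar>b\<bar> * ((real n + 1) * R + 1))"
      using cosh_le_exp_abs[of "b * ((real n + 1) * R + 1)"] R by (simp add: abs_mult)
    also have "\<dots> = exp (\<bar>b\<bar> * (R + 1)) * q ^ n"
      by (simp add: q_def exp_add[symmetric] exp_of_nat_mult[symmetric] algebra_simps)
    finally have c: "a * cosh (b * ((real n + 1) * R + 1)) \<le> K * q ^ n"
      using a by (simp add: K_def mult_left_mono mult.assoc)
    have "poisson_weight lam n * (a * cosh (b * ((real n + 1) * R + 1)) + 1) \<le> poisson_weight lam n * (K * q ^ n + 1)"
      using c w0[of n] by (intro mult_left_mono) auto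
    also have "\<dots> = exp (- lam) * K * (inverse (fact n) * (lam * q) ^ n) + exp (- lam) * (inverse (fact n) * lam ^ n)"
      by (simp add: poisson_weight_def field_simps power_mult_distrib)
    finally show ?thesis .
  qed
  show "summable (\<lambda>n. poisson_weight lam n * (a * cosh (b * ((real n + 1) * R + 1)) + 1))"
    by (rule summable_comparison_test[OF _ sE]) (use bnd w0 a in \<open>auto intro!: exI[of _ 0] simp: abs_of_nonneg\<close>)
  show "summable (poisson_weight lam)"
  proof (rule summable_comparison_test[OF _ summable_mult[OF s2, of "exp (- lam)"]])
    show "\<exists>N. \<forall>n\<ge>N. norm (poisson_weight lam n) \<le> exp (- lam) * (inverse (fact n) * lam ^ n)"
      using w0 by (auto simp: poisson_weight_def field_simps intro!: exI[of _ 0])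
  qed
qed


theorem theorem8:
  fixes f :: "real \<Rightarrow> real" and a b lam :: real and \<rho> :: "real measure"
  assumes "continuous_on UNIV f"
    and "a > 0"
    and "\<And>x. \<bar>f x\<bar> \<le> a * cosh (b * x)"
    and "lam > 0"
    and "compactly_supported_prob \<rho>"
  shows "\<exists>(l :: nat \<Rightarrow> real) (r :: nat \<Rightarrow> real) (p :: nat \<Rightarrow> real \<Rightarrow> real).
     (\<forall>k. l k \<le> r k \<and> real_trig_poly (p k)) \<and>
     (\<forall>e>0. \<forall>\<^sub>F k in sequentially. \<forall>x\<in>{l k..r k}. \<bar>f x - p k x\<bar> < e) \<and>
     (\<forall>x\<in>msupp \<rho>. vague_conv (\<lambda>k. sigma_x lam (p k) \<rho> x) (sigma_x lam f \<rho> x)) \<and>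
     vague_conv (\<lambda>k. sigma lam (p k) \<rho>) (sigma lam f \<rho>) \<and>
     uniform_limit (msupp \<rho>)
        (\<lambda>k x. integral\<^sup>L (sigma_x lam (p k) \<rho> x) (\<lambda>y. y))
        (\<lambda>x. integral\<^sup>L (sigma_x lam f \<rho> x) (\<lambda>y. y)) sequentially \<and>
     (\<lambda>k. integral\<^sup>L (sigma lam (p k) \<rho>) (\<lambda>y. y)) \<longlonglongrightarrow> integral\<^sup>L (sigma lam f \<rho>) (\<lambda>y. y)"
proof -
  note fc = assms(1) and a = assms(2) and fb = assms(3) and lam = assms(4)
  have rP: "prob_space \<rho>" and rS: "sets \<rho> = sets borel" and rK: "compact (msupp \<rho>)"
    using assms(5) unfolding compactly_supported_prob_def by auto
  have "bounded (msupp \<rho>)" by (rule compact_imp_bounded[OF rK])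
  then obtain R0 where R0: "\<forall>x\<in>msupp \<rho>. \<bar>x\<bar> \<le> R0" unfolding bounded_real by blast
  define R where "R = max R0 0"
  have R: "R \<ge> 0" by (simp add: R_def)
  have xR: "\<bar>x\<bar> \<le> R" if "x \<in> msupp \<rho>" for x using R0 that unfolding R_def by fastforce
  have aR: "AE y in \<rho>. \<bar>y\<bar> \<le> R"
    using msupp_AE[OF rS] by (rule AE_mp) (auto intro!: AE_I2 xR)
  note CP = conv_pow_bound[OF rP rS aR]
  have "\<forall>k. \<exists>q. real_trig_poly q \<and> continuous_on UNIV q \<and>
     (\<forall>y. \<bar>y\<bar> \<le> real k \<longrightarrow> \<bar>q y - f y\<bar> < 1 / (real k + 1)) \<and>
     (\<forall>y. \<bar>q y\<bar> \<le> a * cosh (b * (\<bar>y\<bar> + 1)) + 1)"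
    using trig_approx[OF fc a fb] by blast
  then obtain p where p: "\<And>k. real_trig_poly (p k) \<and> continuous_on UNIV (p k) \<and>
     (\<forall>y. \<bar>y\<bar> \<le> real k \<longrightarrow> \<bar>p k y - f y\<bar> < 1 / (real k + 1)) \<and>
     (\<forall>y. \<bar>p k y\<bar> \<le> a * cosh (b * (\<bar>y\<bar> + 1)) + 1)"
    by metis
  have pm: "p k \<in> borel_measurable borel" for k using p[of k] by (intro borel_measurable_continuous_onI) blast
  have fm: "f \<in> borel_measurable borel" by (rule borel_measurable_continuous_onI[OF fc])
  have pf: "\<bar>p k y - f y\<bar> < 1 / (real k + 1)" if "\<bar>y\<bar> \<le> real k" for k y using p[of k] that by blast
  define C where "C n = a * cosh (b * ((real n + 1) * R + 1)) + 1" for n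
  define w where "w = poisson_weight lam"
  have C0: "C n \<ge> 0" for n using a by (simp add: C_def)
  have w0: "w n \<ge> 0" for n using lam by (simp add: w_def poisson_weight_def)
  have smC: "summable (\<lambda>n. w n * C n)" and smw: "summable w"
    using summable_weights[OF lam a R] by (simp_all add: w_def C_def)
  have Cf: "\<bar>f y\<bar> \<le> C n" if "\<bar>y\<bar> \<le> (real n + 1) * R" for n y
  proof -
    have "\<bar>b * y\<bar> \<le> \<bar>b * ((real n + 1) * R + 1)\<bar>"
      using that R by (simp add: abs_mult mult_left_mono)
    then have "cosh (b * y) \<le> cosh (b * ((real n + 1) * R + 1))" by (rule cosh_mono_abs)
    then have "a * cosh (b * y) \<le> a * cosh (b * ((real n + 1) * R + 1))" using a by simp
    then show ?thesis using fb[of y] by (simp add: C_def)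
  qed
  have Cp: "\<bar>p k y\<bar> \<le> C n" if "\<bar>y\<bar> \<le> (real n + 1) * R" for k n y
  proof -
    have "\<bar>b * (\<bar>y\<bar> + 1)\<bar> \<le> \<bar>b * ((real n + 1) * R + 1)\<bar>"
      using that R by (simp add: abs_mult mult_left_mono)
    then have "cosh (b * (\<bar>y\<bar> + 1)) \<le> cosh (b * ((real n + 1) * R + 1))" by (rule cosh_mono_abs)
    then have "a * cosh (b * (\<bar>y\<bar> + 1)) \<le> a * cosh (b * ((real n + 1) * R + 1))" using a by simp
    moreover have "\<bar>p k y\<bar> \<le> a * cosh (b * (\<bar>y\<bar> + 1)) + 1" using p[of k] by blast
    ultimately show ?thesis unfolding C_def by linarith
  qed
  define Mx where "Mx x n = convolution (return borel x) (conv_pow \<rho> n)" for x n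
  define Ms where "Ms (x::real) n = conv_pow \<rho> (n + 1)" for x n
  have MxP: "prob_space (Mx x n)" "sets (Mx x n) = sets borel" "AE y in Mx x n. \<bar>y\<bar> \<le> (real n + 1) * R"
    if "x \<in> msupp \<rho>" for x n
  proof -
    have r: "prob_space (return borel x)" "sets (return borel x) = sets borel"
      by (auto intro: prob_space_return)
    have "AE y in return borel x. \<bar>y\<bar> \<le> R" by (subst AE_return) (auto intro: xR[OF that])
    note cb = conv_bound[OF r _ _ this, of "conv_pow \<rho> n" "real n * R"]
    show "prob_space (Mx x n)" "sets (Mx x n) = sets borel" unfolding Mx_def using cb CP[of n] by auto
    show "AE y in Mx x n. \<bar>y\<bar> \<le> (real n + 1) * R" unfolding Mx_def using cb CP[of n] by (auto simp: algebra_simps)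
  qed
  have MsP: "prob_space (Ms x n)" "sets (Ms x n) = sets borel" "AE y in Ms x n. \<bar>y\<bar> \<le> (real n + 1) * R"
    for x n unfolding Ms_def using CP[of "n + 1"] by (auto simp: algebra_simps)
  have sx: "sigma_x lam u \<rho> x = measure_series w (\<lambda>n. distr (Mx x n) borel (hfun u (n + 1)))" for u x
    by (simp add: sigma_x_def Mx_def w_def)
  have ss: "sigma lam u \<rho> = measure_series w (\<lambda>n. distr (Ms 0 n) borel (hfun u (n + 1)))" for u
    by (simp add: sigma_def Ms_def w_def)
  have convx: "uniform_limit (msupp \<rho>) (\<lambda>k x. integral\<^sup>L (sigma_x lam (p k) \<rho> x) \<phi>) (\<lambda>x. integral\<^sup>L (sigma_x lam f \<rho> x) \<phi>) sequentially"
    if "\<phi> \<in> borel_measurable borel" "uniformly_continuous_on UNIV \<phi>" "\<And>t. \<bar>\<phi> t\<bar> \<le> A * \<bar>t\<bar> + B" "A \<ge> 0" "B \<ge> 0"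
    for \<phi> A B
    unfolding sx
    by (rule main_conv[OF w0 smw MxP(1) MxP(2) MxP(3) R fm pm Cf Cp C0 smC pf that])
  have convs: "uniform_limit (UNIV :: real set) (\<lambda>k x. integral\<^sup>L (sigma lam (p k) \<rho>) \<phi>) (\<lambda>x. integral\<^sup>L (sigma lam f \<rho>) \<phi>) sequentially"
    if "\<phi> \<in> borel_measurable borel" "uniformly_continuous_on UNIV \<phi>" "\<And>t. \<bar>\<phi> t\<bar> \<le> A * \<bar>t\<bar> + B" "A \<ge> 0" "B \<ge> 0"
    for \<phi> A B
  proof -
    have "uniform_limit UNIV
     (\<lambda>k x. integral\<^sup>L (measure_series w (\<lambda>n. distr (Ms x n) borel (hfun (p k) (n + 1)))) \<phi>)
     (\<lambda>x. integral\<^sup>L (measure_series w (\<lambda>n. distr (Ms x n) borel (hfun f (n + 1)))) \<phi>) sequentially"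
      by (rule main_conv[OF w0 smw MsP(1) MsP(2) MsP(3) R fm pm Cf Cp C0 smC pf that])
    then show ?thesis by (simp add: ss Ms_def)
  qed
  have idprops: "(\<lambda>y::real. y) \<in> borel_measurable borel" "uniformly_continuous_on UNIV (\<lambda>y::real. y)"
    "\<And>t::real. \<bar>t\<bar> \<le> 1 * \<bar>t\<bar> + 0"
  proof -
    show "(\<lambda>y::real. y) \<in> borel_measurable borel" by simp
    show "uniformly_continuous_on UNIV (\<lambda>y::real. y)"
      unfolding uniformly_continuous_on_def by blast
    show "\<And>t::real. \<bar>t\<bar> \<le> 1 * \<bar>t\<bar> + 0" by simp
  qed
  have vague_g: "uniform_limit (msupp \<rho>) (\<lambda>k x. integral\<^sup>L (sigma_x lam (p k) \<rho> x) g) (\<lambda>x. integral\<^sup>L (sigma_x lam f \<rho> x) g) sequentially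
     \<and> uniform_limit (UNIV :: real set) (\<lambda>k x. integral\<^sup>L (sigma lam (p k) \<rho>) g) (\<lambda>x. integral\<^sup>L (sigma lam f \<rho>) g) sequentially"
    if "continuous_on UNIV g" "compact (closure {y. g y \<noteq> 0})" for g :: "real \<Rightarrow> real"
  proof -
    note tp = test_fun_props[OF that]
    obtain B where B: "B \<ge> 0" "\<And>t. \<bar>g t\<bar> \<le> B" using tp(2) by blast
    have gm: "g \<in> borel_measurable borel" by (rule borel_measurable_continuous_onI[OF that(1)])
    have gb: "\<And>t. \<bar>g t\<bar> \<le> 0 * \<bar>t\<bar> + B" using B by simp
    show ?thesis using convx[OF gm tp(1) gb _ B(1)] convs[OF gm tp(1) gb _ B(1)] by simp
  qed
  have G1: "\<forall>k. - real k \<le> real k \<and> real_trig_poly (p k)" using p by simp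
  have G2: "\<forall>e>0. \<forall>\<^sub>F k in sequentially. \<forall>x\<in>{- real k..real k}. \<bar>f x - p k x\<bar> < e"
  proof (intro allI impI)
    fix e :: real assume e: "e > 0"
    obtain K :: nat where K: "1 / e < real K" using reals_Archimedean2 by blast
    show "\<forall>\<^sub>F k in sequentially. \<forall>x\<in>{- real k..real k}. \<bar>f x - p k x\<bar> < e"
      unfolding eventually_sequentially
    proof (intro exI[of _ K] allI impI ballI)
      fix k x assume k: "K \<le> k" and x: "x \<in> {- real k..real k}"
      have "\<bar>p k x - f x\<bar> < 1 / (real k + 1)" using x by (intro pf) auto
      also have "1 / (real k + 1) < e"
      proof -
        have "1 / e < real k + 1" using K k by linarith
        then show ?thesis using e by (simp add: field_simps)
      qed
      finally show "\<bar>f x - p k x\<bar> < e" by (simp add: abs_minus_commute)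
    qed
  qed
  have G3: "\<forall>x\<in>msupp \<rho>. vague_conv (\<lambda>k. sigma_x lam (p k) \<rho> x) (sigma_x lam f \<rho> x)"
  proof
    fix x assume x: "x \<in> msupp \<rho>"
    show "vague_conv (\<lambda>k. sigma_x lam (p k) \<rho> x) (sigma_x lam f \<rho> x)"
      unfolding vague_conv_def
    proof (intro allI impI)
      fix g :: "real \<Rightarrow> real" assume "continuous_on UNIV g \<and> compact (closure {y. g y \<noteq> 0})"
      then have "uniform_limit (msupp \<rho>) (\<lambda>k x. integral\<^sup>L (sigma_x lam (p k) \<rho> x) g) (\<lambda>x. integral\<^sup>L (sigma_x lam f \<rho> x) g) sequentially"
        using vague_g by blast
      from tendsto_uniform_limitI[OF this x]
      show "(\<lambda>k. integral\<^sup>L (sigma_x lam (p k) \<rho> x) g) \<longlonglongrightarrow> integral\<^sup>L (sigma_x lam f \<rho> x) g" by simp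
    qed
  qed
  have G4: "vague_conv (\<lambda>k. sigma lam (p k) \<rho>) (sigma lam f \<rho>)"
    unfolding vague_conv_def
  proof (intro allI impI)
    fix g :: "real \<Rightarrow> real" assume "continuous_on UNIV g \<and> compact (closure {y. g y \<noteq> 0})"
    then have "uniform_limit (UNIV :: real set) (\<lambda>k x. integral\<^sup>L (sigma lam (p k) \<rho>) g) (\<lambda>x. integral\<^sup>L (sigma lam f \<rho>) g) sequentially"
      using vague_g by blast
    from tendsto_uniform_limitI[OF this, of 0]
    show "(\<lambda>k. integral\<^sup>L (sigma lam (p k) \<rho>) g) \<longlonglongrightarrow> integral\<^sup>L (sigma lam f \<rho>) g" by simp
  qed
  have G5: "uniform_limit (msupp \<rho>) (\<lambda>k x. integral\<^sup>L (sigma_x lam (p k) \<rho> x) (\<lambda>y. y))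
        (\<lambda>x. integral\<^sup>L (sigma_x lam f \<rho> x) (\<lambda>y. y)) sequentially"
    by (rule convx[OF idprops]) auto
  have G6: "(\<lambda>k. integral\<^sup>L (sigma lam (p k) \<rho>) (\<lambda>y. y)) \<longlonglongrightarrow> integral\<^sup>L (sigma lam f \<rho>) (\<lambda>y. y)"
  proof -
    have "uniform_limit (UNIV :: real set) (\<lambda>k x. integral\<^sup>L (sigma lam (p k) \<rho>) (\<lambda>y. y)) (\<lambda>x. integral\<^sup>L (sigma lam f \<rho>) (\<lambda>y. y)) sequentially"
      by (rule convs[OF idprops]) auto
    from tendsto_uniform_limitI[OF this, of 0] show ?thesis by simp
  qed
  show ?thesis
    apply (rule exI[of _ "\<lambda>k. - real k"], rule exI[of _ "\<lambda>k. real k"], rule exI[of _ p])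
    using G1 G2 G3 G4 G5 G6 by blast
qed

end
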